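(* Let $\Gamma=\mathsf{PSL}_2(\mathbb{Z})=\langle U,S\mid U^3,S^2\rangle$, where $U$ has order $3$ and $S$ has order $2$. For integers $n,m\ge 0$ let $q(n,m)$ be the number of words in the alphabet $\{U,S\}$ containing exactly $n$ letters $U$ and $m$ letters $S$ which are equal to the identity in $\Gamma$ (the empty word counts, so $q(0,0)=1$). Let $$Q(x,y)=\sum_{n,m\ge 0}q(n,m)x^ny^m,\qquad T(x)=Q(x,x)=\sum_{n\ge0}t(n)x^n,$$ where $t(n)$ is the number of words of length $n$ in $\{U,S\}$ equal to the identity in $\Gamma$. Then $Q(x,y)$ is an algebraic function of degree $3$ over $\mathbb{Q}(x,y)$ satisfying $$(y^6-x^6+6y^2x^3-3y^4+2x^3+3y^2-1)Q^3+(x^3y^2-y^4+x^3+2y^2-1)Q^2+(x^3-y^2+1)Q+1=0.$$ In particular, $T(x)$ is an algebraic function of degree $3$ over $\mathbb{Q}(x)$ satisfying $$(6x^5-3x^4+2x^3+3x^2-1)T^3+(x^5-x^4+x^3+2x^2-1)T^2+(x^3-x^2+1)T+1=0.$$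
   Context: Words are finite sequences over the two-letter alphabet $\{U,S\}$, interpreted as products of the corresponding group elements in $\Gamma$. The generating functions are formal power series (convergent for small $|x|,|y|$). *)

theory Defs
  imports Complex_Main "HOL-Computational_Algebra.Polynomial_FPS"
begin

datatype letter = U | S

text \<open>2x2 integer matrices (a,b,c,d) = [[a,b],[c,d]] with matrix multiplication.\<close>
type_synonym mat2 = "int \<times> int \<times> int \<times> int"

definition mat2_mult :: "mat2 \<Rightarrow> mat2 \<Rightarrow> mat2" where
  "mat2_mult A B = (case A of (a,b,c,d) \<Rightarrow> case B of (e,f,g,h) \<Rightarrow>
      (a*e + b*g, a*f + b*h, c*e + d*g, c*f + d*h))"

definition mat2_id :: mat2 where "mat2_id = (1,0,0,1)"

text \<open>Lifts to SL2(Z) of the generators of PSL2(Z): U of order 3, S of order 2.\<close>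
fun letter_mat :: "letter \<Rightarrow> mat2" where
  "letter_mat U = (0,-1,1,1)"
| "letter_mat S = (0,-1,1,0)"

definition word_mat :: "letter list \<Rightarrow> mat2" where
  "word_mat w = foldr (\<lambda>l M. mat2_mult (letter_mat l) M) w mat2_id"

text \<open>A word is trivial in PSL2(Z) = SL2(Z)/{+-1} iff its matrix is +-I.\<close>
definition trivial_in_Gamma :: "letter list \<Rightarrow> bool" where
  "trivial_in_Gamma w \<longleftrightarrow> word_mat w = (1,0,0,1) \<or> word_mat w = (-1,0,0,-1)"

definition q :: "nat \<Rightarrow> nat \<Rightarrow> nat" where
  "q n m = card {w. length (filter (\<lambda>l. l = U) w) = n \<and> length (filter (\<lambda>l. l = S) w) = m
                    \<and> trivial_in_Gamma w}"

definition t :: "nat \<Rightarrow> nat" where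
  "t n = card {w. length w = n \<and> trivial_in_Gamma w}"

text \<open>Bivariate series: outer variable y, coefficients are series in x.
  Q = sum_m (sum_n q(n,m) x^n) y^m.\<close>
definition Qser :: "rat fps fps" where
  "Qser = Abs_fps (\<lambda>m. Abs_fps (\<lambda>n. of_nat (q n m)))"

definition Tser :: "rat fps" where
  "Tser = Abs_fps (\<lambda>n. of_nat (t n))"

definition xx :: "rat fps fps" where "xx = fps_const fps_X"
definition yy :: "rat fps fps" where "yy = fps_X"

text \<open>Embedding of Q[x][y] (polys in y with coefficients polys in x) into the series ring.\<close>
definition embed2 :: "rat poly poly \<Rightarrow> rat fps fps" where
  "embed2 p = fps_of_poly (map_poly fps_of_poly p)"

end

theory Submission
  imports Defs "HOL-Computational_Algebra.Polynomial_Factorial" "HOL-Computational_Algebra.Field_as_Ring"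
begin
unbundle fps_syntax


lemma mat2_mult_assoc: "mat2_mult (mat2_mult A B) C = mat2_mult A (mat2_mult B C)"
  by (cases A; cases B; cases C) (simp add: mat2_mult_def algebra_simps)

lemma mat2_mult_id_left[simp]: "mat2_mult mat2_id A = A"
  by (cases A) (simp add: mat2_mult_def mat2_id_def)

definition negm :: "mat2 \<Rightarrow> mat2" where
  "negm A = (case A of (a,b,c,d) \<Rightarrow> (-a,-b,-c,-d))"

lemma negm_negm[simp]: "negm (negm A) = A"
  by (cases A) (simp add: negm_def)

lemma negm_mult: "mat2_mult (negm A) B = negm (mat2_mult A B)"
  by (cases A; cases B) (simp add: mat2_mult_def negm_def algebra_simps)

lemma mult_negm: "mat2_mult A (negm B) = negm (mat2_mult A B)"
  by (cases A; cases B) (simp add: mat2_mult_def negm_def algebra_simps)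

definition triv :: "mat2 \<Rightarrow> bool" where
  "triv X \<longleftrightarrow> X = (1,0,0,1) \<or> X = (-1,0,0,-1)"

lemma triv_negm[simp]: "triv (negm X) = triv X"
  by (cases X) (auto simp: triv_def negm_def)

datatype syl = Sy | Ua | Ub

fun kind :: "syl \<Rightarrow> bool" where
  "kind Sy = False" | "kind Ua = True" | "kind Ub = True"

fun sylmat :: "syl \<Rightarrow> mat2" where
  "sylmat Sy = (0,-1,1,0)" | "sylmat Ua = (0,-1,1,1)" | "sylmat Ub = (-1,-1,1,0)"

fun smat :: "syl list \<Rightarrow> mat2" where
  "smat [] = mat2_id"
| "smat (a # s) = mat2_mult (smat s) (sylmat a)"

fun red :: "syl list \<Rightarrow> bool" where
  "red (a # b # s) = (kind a \<noteq> kind b \<and> red (b # s))"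
| "red _ = True"

fun actU :: "syl list \<Rightarrow> syl list" where
  "actU [] = [Ua]"
| "actU (Sy # s) = Ua # Sy # s"
| "actU (Ua # s) = Ub # s"
| "actU (Ub # s) = s"

fun actS :: "syl list \<Rightarrow> syl list" where
  "actS [] = [Sy]"
| "actS (Sy # s) = s"
| "actS (a # s) = Sy # a # s"

lemma red_tl: "red (a # s) \<Longrightarrow> red s"
  by (cases s) auto

lemma red_kind: "red (a # s) \<Longrightarrow> kind a = kind b \<Longrightarrow> red (b # s)"
  by (cases s) auto

lemma red_actU: "red s \<Longrightarrow> red (actU s)"
  by (cases s rule: actU.cases) (auto dest: red_tl intro: red_kind)

lemma red_actS: "red s \<Longrightarrow> red (actS s)"
  apply (cases s rule: actS.cases)
  apply (auto dest: red_tl)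
  done

lemma smat_actU: "smat (actU s) = mat2_mult (smat s) (letter_mat U) \<or>
   smat (actU s) = negm (mat2_mult (smat s) (letter_mat U))"
proof (cases s rule: actU.cases)
  case (3 s')
  then show ?thesis
    by (intro disjI1) (cases "smat s'", simp add: mat2_mult_def)
next
  case (4 s')
  have "mat2_mult (mat2_mult (smat s') (-1,-1,1,0)) (0,-1,1,1) = negm (smat s')"
    by (simp add: mat2_mult_assoc) (cases "smat s'", simp add: mat2_mult_def negm_def)
  then show ?thesis using 4 by simp
qed auto

lemma smat_actS: "smat (actS s) = mat2_mult (smat s) (letter_mat S) \<or>
   smat (actS s) = negm (mat2_mult (smat s) (letter_mat S))"
proof (cases s rule: actS.cases)
  case (2 s')
  have "mat2_mult (mat2_mult (smat s') (0,-1,1,0)) (0,-1,1,0) = negm (smat s')"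
    by (simp add: mat2_mult_assoc) (cases "smat s'", simp add: mat2_mult_def negm_def)
  then show ?thesis using 2 by simp
qed auto

fun vm :: "int \<times> int \<Rightarrow> mat2 \<Rightarrow> int \<times> int" where
  "vm (x,y) (a,b,c,d) = (x*a + y*c, x*b + y*d)"

lemma vm_mult: "vm v (mat2_mult A B) = vm (vm v A) B"
  by (cases v; cases A; cases B) (simp add: mat2_mult_def algebra_simps)

fun cP :: "int \<times> int \<Rightarrow> bool" where
  "cP (a,b) = (a > 0 \<and> b > 0 \<or> a < 0 \<and> b < 0)"
fun cN :: "int \<times> int \<Rightarrow> bool" where
  "cN (a,b) = (a > 0 \<and> b < 0 \<or> a < 0 \<and> b > 0)"
fun nrm :: "int \<times> int \<Rightarrow> int" where
  "nrm (a,b) = \<bar>a\<bar> + \<bar>b\<bar>"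

definition startc :: "syl \<Rightarrow> int \<times> int \<Rightarrow> bool" where
  "startc a v = (if kind a then cN v else cP v)"
definition endc :: "syl \<Rightarrow> int \<times> int \<Rightarrow> bool" where
  "endc a v = (if kind a then cP v else cN v)"

lemma step_syl: "startc a v \<Longrightarrow> endc a (vm v (sylmat a)) \<and>
    nrm (vm v (sylmat a)) \<ge> nrm v + (if kind a then 1 else 0)"
  by (cases v; cases a) (auto simp: startc_def endc_def)

lemma pingpong:
  "red s \<Longrightarrow> s \<noteq> [] \<Longrightarrow> startc (last s) v \<Longrightarrow>
    endc (hd s) (vm v (smat s)) \<and>
    nrm (vm v (smat s)) \<ge> nrm v + (if kind (hd s) \<or> length s \<ge> 2 then 1 else 0)"
proof (induction s)
  case Nil then show ?case by simp
next
  case (Cons a s)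
  show ?case
  proof (cases s)
    case Nil
    then show ?thesis using Cons.prems step_syl[of a v] by simp
  next
    case (Cons b s')
    have r: "red s" using Cons.prems(1) by (rule red_tl)
    have k: "kind a \<noteq> kind b" using Cons.prems(1) \<open>s = b # s'\<close> by simp
    have st: "startc (last s) v" using Cons.prems(3) \<open>s = b # s'\<close> by simp
    from Cons.IH[OF r] st \<open>s = b # s'\<close>
    have ih: "endc b (vm v (smat s)) \<and> nrm (vm v (smat s)) \<ge> nrm v + (if kind b then 1 else 0)"
      by (auto split: if_splits)
    have sa: "startc a (vm v (smat s))"
      using ih k by (cases a; cases b) (auto simp: startc_def endc_def)
    from step_syl[OF sa] ih k show ?thesis
      by (simp add: vm_mult) (cases a; cases b; auto)
  qed
qed

lemma faithful: "red s \<Longrightarrow> s \<noteq> [] \<Longrightarrow> \<not> triv (smat s)"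
proof
  assume r: "red s" and ne: "s \<noteq> []" and t: "triv (smat s)"
  define v :: "int \<times> int" where "v = (if kind (last s) then (1,-1) else (1,1))"
  have sv: "startc (last s) v" by (simp add: v_def startc_def)
  from pingpong[OF r ne sv] have pp:
    "endc (hd s) (vm v (smat s)) \<and>
    nrm (vm v (smat s)) \<ge> nrm v + (if kind (hd s) \<or> length s \<ge> 2 then 1 else 0)" .
  have "vm v (smat s) = v \<or> vm v (smat s) = (- fst v, - snd v)"
    using t by (cases v) (auto simp: triv_def)
  then have eqn: "nrm (vm v (smat s)) = nrm v" and
     cl: "(cP (vm v (smat s)) = cP v) \<and> (cN (vm v (smat s)) = cN v)"
    by (auto simp: v_def)
  from pp eqn have small: "\<not> kind (hd s)" "length s < 2" by (auto split: if_splits)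
  then obtain a where "s = [a]" using ne by (cases s) auto
  with small have "s = [Sy]" by (cases a) auto
  then show False using pp cl by (simp add: v_def endc_def)
qed


definition cntU :: "letter list \<Rightarrow> nat" where "cntU w = length (filter (\<lambda>l. l = U) w)"
definition cntS :: "letter list \<Rightarrow> nat" where "cntS w = length (filter (\<lambda>l. l = S) w)"

lemma cnt_simps[simp]: "cntU [] = 0" "cntS [] = 0"
  "cntU (U # w) = Suc (cntU w)" "cntS (U # w) = cntS w"
  "cntU (S # w) = cntU w" "cntS (S # w) = Suc (cntS w)"
  by (simp_all add: cntU_def cntS_def)

lemma length_cnt: "length w = cntU w + cntS w"
proof (induction w)
  case (Cons l w) then show ?case by (cases l) auto
qed simp

lemma UNIV_letter: "(UNIV :: letter set) = {U, S}"
  using letter.exhaust by auto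

lemma finite_len: "finite {w :: letter list. length w = k}"
proof -
  have "{w :: letter list. length w = k} = {w. set w \<subseteq> UNIV \<and> length w = k}" by simp
  also have "finite \<dots>" by (rule finite_lists_length_eq) (simp add: UNIV_letter)
  finally show ?thesis .
qed

definition Wset :: "mat2 \<Rightarrow> nat \<Rightarrow> nat \<Rightarrow> letter list set" where
  "Wset M n m = {w. cntU w = n \<and> cntS w = m \<and> triv (mat2_mult M (word_mat w))}"

definition W :: "mat2 \<Rightarrow> nat \<Rightarrow> nat \<Rightarrow> nat" where
  "W M n m = card (Wset M n m)"

lemma finite_Wset: "finite (Wset M n m)"
  by (rule finite_subset[OF _ finite_len[of "n+m"]]) (auto simp: Wset_def length_cnt)

lemma word_mat_simps[simp]: "word_mat [] = mat2_id"
  "word_mat (l # w) = mat2_mult (letter_mat l) (word_mat w)"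
  by (simp_all add: word_mat_def)

lemma Wset_negm: "Wset (negm M) n m = Wset M n m"
  by (simp add: Wset_def negm_mult)

lemma W_negm: "W (negm M) n m = W M n m"
  by (simp add: W_def Wset_negm)

lemma Wset_split: "Wset M n m =
   {w. w = [] \<and> n = 0 \<and> m = 0 \<and> triv M} \<union>
   ((#) U ` {w. n > 0 \<and> w \<in> Wset (mat2_mult M (letter_mat U)) (n-1) m}) \<union>
   ((#) S ` {w. m > 0 \<and> w \<in> Wset (mat2_mult M (letter_mat S)) n (m-1)})"
  (is "?L = ?A \<union> ?B \<union> ?C")
proof (rule set_eqI)
  fix w
  show "w \<in> ?L \<longleftrightarrow> w \<in> ?A \<union> ?B \<union> ?C"
  proof (cases w)
    case Nil then show ?thesis by (cases M) (auto simp: Wset_def mat2_id_def mat2_mult_def)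
  next
    case (Cons l w')
    then show ?thesis
      by (cases l) (auto simp: Wset_def mat2_mult_assoc simp del: letter_mat.simps)
  qed
qed

lemma W_rec: "W M n m = (if n = 0 \<and> m = 0 \<and> triv M then 1 else 0)
   + (if n > 0 then W (mat2_mult M (letter_mat U)) (n-1) m else 0)
   + (if m > 0 then W (mat2_mult M (letter_mat S)) n (m-1) else 0)"
proof -
  let ?A = "{w :: letter list. w = [] \<and> n = 0 \<and> m = 0 \<and> triv M}"
  let ?B' = "{w. n > 0 \<and> w \<in> Wset (mat2_mult M (letter_mat U)) (n-1) m}"
  let ?C' = "{w. m > 0 \<and> w \<in> Wset (mat2_mult M (letter_mat S)) n (m-1)}"
  have fB: "finite ?B'" by (rule finite_subset[OF _ finite_Wset]) auto
  have fC: "finite ?C'" by (rule finite_subset[OF _ finite_Wset]) auto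
  have fA: "finite ?A" by (rule finite_subset[of _ "{[]}"]) auto
  have cA: "card ?A = (if n = 0 \<and> m = 0 \<and> triv M then 1 else 0)" by auto
  have cB: "card ((#) U ` ?B') = (if n > 0 then W (mat2_mult M (letter_mat U)) (n-1) m else 0)"
    by (subst card_image) (auto simp: W_def)
  have cC: "card ((#) S ` ?C') = (if m > 0 then W (mat2_mult M (letter_mat S)) n (m-1) else 0)"
    by (subst card_image) (auto simp: W_def)
  have h0: "W M n m = card (?A \<union> (#) U ` ?B' \<union> (#) S ` ?C')"
    unfolding W_def by (subst Wset_split) (rule refl)
  have h1: "card (?A \<union> (#) U ` ?B' \<union> (#) S ` ?C') = card (?A \<union> (#) U ` ?B') + card ((#) S ` ?C')"
    by (rule card_Un_disjoint) (use fA fB fC in auto)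
  have h2: "card (?A \<union> (#) U ` ?B') = card ?A + card ((#) U ` ?B')"
    using fB by (intro card_Un_disjoint[OF fA]) auto
  show ?thesis using h0 h1 h2 cA cB cC by simp
qed

definition Gc :: "syl list \<Rightarrow> rat fps fps" where
  "Gc s = Abs_fps (\<lambda>m. Abs_fps (\<lambda>n. of_nat (W (smat s) n m)))"

definition Rec :: "(syl list \<Rightarrow> rat fps fps) \<Rightarrow> bool" where
  "Rec K \<longleftrightarrow> (\<forall>s. red s \<longrightarrow> (\<forall>m n. K s $ m $ n =
      (if s = [] \<and> m = 0 \<and> n = 0 then 1 else 0)
      + (if n > 0 then K (actU s) $ m $ (n-1) else 0)
      + (if m > 0 then K (actS s) $ (m-1) $ n else 0)))"

lemma W_actU: "W (mat2_mult (smat s) (letter_mat U)) n m = W (smat (actU s)) n m"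
  using smat_actU[of s] by (auto simp: W_negm)

lemma W_actS: "W (mat2_mult (smat s) (letter_mat S)) n m = W (smat (actS s)) n m"
  using smat_actS[of s] by (auto simp: W_negm)

lemma triv_smat: "red s \<Longrightarrow> triv (smat s) \<longleftrightarrow> s = []"
  using faithful[of s] by (auto simp: triv_def mat2_id_def)

lemma Rec_Gc: "Rec Gc"
  unfolding Rec_def
proof (intro allI impI)
  fix s m n assume r: "red s"
  show "Gc s $ m $ n = (if s = [] \<and> m = 0 \<and> n = 0 then 1 else 0)
      + (if n > 0 then Gc (actU s) $ m $ (n-1) else 0)
      + (if m > 0 then Gc (actS s) $ (m-1) $ n else 0)"
    unfolding Gc_def using W_rec[of "smat s" n m] triv_smat[OF r]
    by (simp add: W_actU W_actS del: letter_mat.simps)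
qed

lemma Rec_unique:
  assumes "Rec K1" "Rec K2" "red s"
  shows "K1 s = K2 s"
proof -
  have main: "\<forall>s m n. red s \<longrightarrow> m + n = d \<longrightarrow> K1 s $ m $ n = K2 s $ m $ n" for d
  proof (induction d rule: less_induct)
    case (less d)
    show ?case
    proof (intro allI impI)
      fix s m n assume r: "red s" and d: "m + n = d"
      have e1: "K1 s $ m $ n = (if s = [] \<and> m = 0 \<and> n = 0 then 1 else 0)
      + (if n > 0 then K1 (actU s) $ m $ (n-1) else 0)
      + (if m > 0 then K1 (actS s) $ (m-1) $ n else 0)"
        using assms(1) r unfolding Rec_def by blast
      have e2: "K2 s $ m $ n = (if s = [] \<and> m = 0 \<and> n = 0 then 1 else 0)
      + (if n > 0 then K2 (actU s) $ m $ (n-1) else 0)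
      + (if m > 0 then K2 (actS s) $ (m-1) $ n else 0)"
        using assms(2) r unfolding Rec_def by blast
      have "n > 0 \<Longrightarrow> K1 (actU s) $ m $ (n-1) = K2 (actU s) $ m $ (n-1)"
        using less.IH[of "m + (n-1)"] d red_actU[OF r] by auto
      moreover have "m > 0 \<Longrightarrow> K1 (actS s) $ (m-1) $ n = K2 (actS s) $ (m-1) $ n"
        using less.IH[of "(m-1) + n"] d red_actS[OF r] by auto
      ultimately show "K1 s $ m $ n = K2 s $ m $ n" using e1 e2
        by (cases "n > 0"; cases "m > 0") simp_all
    qed
  qed
  show ?thesis
    by (rule fps_ext, rule fps_ext) (use main assms(3) in blast)
qed

lemma Qser_Gc: "Qser = Gc []"
  unfolding Qser_def Gc_def W_def Wset_def q_def trivial_in_Gamma_def triv_def cntU_def cntS_def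
  by simp


definition agr :: "nat \<Rightarrow> rat fps fps \<Rightarrow> rat fps fps \<Rightarrow> bool" where
  "agr d A B \<longleftrightarrow> (\<forall>i j. i + j < d \<longrightarrow> A $ i $ j = B $ i $ j)"

lemma agr_refl[simp]: "agr d A A" by (simp add: agr_def)
lemma agr_mono: "agr d A B \<Longrightarrow> e \<le> d \<Longrightarrow> agr e A B" by (auto simp: agr_def)
lemma agr_trans: "agr d A B \<Longrightarrow> agr d B C \<Longrightarrow> agr d A C" by (auto simp: agr_def)
lemma agr_sym: "agr d A B \<Longrightarrow> agr d B A" by (auto simp: agr_def)

lemma agr_add: "agr d A A' \<Longrightarrow> agr d B B' \<Longrightarrow> agr d (A + B) (A' + B')"
  by (auto simp: agr_def)

lemma mult_nth2: "((A :: rat fps fps) * B) $ m $ n =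
   (\<Sum>i=0..m. \<Sum>j=0..n. A $ i $ j * B $ (m - i) $ (n - j))"
  by (simp add: fps_mult_nth fps_sum_nth)

lemma agr_mult: "agr d A A' \<Longrightarrow> agr d B B' \<Longrightarrow> agr d (A * B) (A' * B')"
  unfolding agr_def
proof (intro allI impI)
  fix m n assume a: "\<forall>i j. i + j < d \<longrightarrow> A $ i $ j = A' $ i $ j"
    and b: "\<forall>i j. i + j < d \<longrightarrow> B $ i $ j = B' $ i $ j" and mn: "m + n < d"
  show "(A * B) $ m $ n = (A' * B') $ m $ n"
    unfolding mult_nth2
    by (intro sum.cong refl) (use a b mn in \<open>auto\<close>)
qed

lemma xx_nth: "(xx * F) $ m $ n = (if n = 0 then 0 else F $ m $ (n - 1))"
  by (simp add: xx_def fps_mult_left_const_nth)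

lemma yy_nth: "(yy * F) $ m $ n = (if m = 0 then 0 else F $ (m - 1) $ n)"
  by (simp add: yy_def)

lemma agr_xx: "agr d A A' \<Longrightarrow> agr (Suc d) (xx * A) (xx * A')"
  by (auto simp: agr_def xx_nth)

lemma agr_yy: "agr d A A' \<Longrightarrow> agr (Suc d) (yy * A) (yy * A')"
  by (auto simp: agr_def yy_nth)

definition Phi :: "(nat \<Rightarrow> rat fps fps) \<Rightarrow> nat \<Rightarrow> rat fps fps" where
  "Phi F i = (if i = 0 then yy + xx * (F 0 * F 1)
      else if i = 1 then xx * F 2 + yy * (F 1 * F 0)
      else if i = 2 then xx + yy * (F 2 * F 0)
      else 1 + xx * (F 1 * F 3) + yy * (F 0 * F 3))"

lemma Phi_contr: "(\<And>i. agr d (F i) (G i)) \<Longrightarrow> agr (Suc d) (Phi F i) (Phi G i)"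
  unfolding Phi_def
  by (auto intro!: agr_add agr_xx agr_yy agr_mult)

definition fit :: "nat \<Rightarrow> nat \<Rightarrow> rat fps fps" where
  "fit k = (Phi ^^ k) (\<lambda>_. 0)"

lemma fit_Suc: "fit (Suc k) = Phi (fit k)" by (simp add: fit_def)

lemma fit_step: "agr k (fit k i) (fit (Suc k) i)"
proof (induction k arbitrary: i)
  case 0 then show ?case by (simp add: agr_def)
next
  case (Suc k)
  show ?case unfolding fit_Suc[of "Suc k"] fit_Suc[of k] using Suc.IH
    by (intro Phi_contr) (simp add: fit_Suc)
qed

lemma fit_stable: "k \<le> j \<Longrightarrow> agr k (fit k i) (fit j i)"
proof (induction j)
  case 0 then show ?case by simp
next
  case (Suc j)
  show ?case
  proof (cases "k = Suc j")
    case True then show ?thesis by simp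
  next
    case False
    then have "k \<le> j" using Suc.prems by simp
    then show ?thesis using Suc.IH agr_mono[OF fit_step[of j i] \<open>k \<le> j\<close>] agr_trans by blast
  qed
qed

definition Lfix :: "nat \<Rightarrow> rat fps fps" where
  "Lfix i = Abs_fps (\<lambda>a. Abs_fps (\<lambda>b. fit (a + b + 1) i $ a $ b))"

lemma Lfix_agr: "agr k (Lfix i) (fit k i)"
  unfolding agr_def
proof (intro allI impI)
  fix a b assume "a + b < k"
  then have "agr (a + b + 1) (fit (a + b + 1) i) (fit k i)" by (intro fit_stable) simp
  then show "Lfix i $ a $ b = fit k i $ a $ b" by (simp add: Lfix_def agr_def)
qed

lemma Lfix_eq: "Phi Lfix i = Lfix i"
proof (rule fps_ext, rule fps_ext)
  fix a b :: nat
  let ?k = "a + b"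
  have "agr (Suc ?k) (Phi Lfix i) (Phi (fit ?k) i)"
    by (intro Phi_contr Lfix_agr)
  moreover have "agr (Suc ?k) (Lfix i) (fit (Suc ?k) i)" by (rule Lfix_agr)
  ultimately show "Phi Lfix i $ a $ b = Lfix i $ a $ b"
    by (simp add: agr_def fit_Suc)
qed

abbreviation "uu \<equiv> Lfix 0"
abbreviation "vv \<equiv> Lfix 1"
abbreviation "ww \<equiv> Lfix 2"
abbreviation "QQ \<equiv> Lfix 3"

lemma eq_u: "uu = yy + xx * (uu * vv)" using Lfix_eq[of 0] by (simp add: Phi_def)
lemma eq_v: "vv = xx * ww + yy * (vv * uu)" using Lfix_eq[of 1] by (simp add: Phi_def)
lemma eq_w: "ww = xx + yy * (ww * uu)" using Lfix_eq[of 2] by (simp add: Phi_def)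
lemma eq_Q: "QQ = 1 + xx * (vv * QQ) + yy * (uu * QQ)" using Lfix_eq[of 3] by (simp add: Phi_def)

fun sf :: "syl \<Rightarrow> rat fps fps" where
  "sf Sy = uu" | "sf Ua = vv" | "sf Ub = ww"

definition Hf :: "syl list \<Rightarrow> rat fps fps" where
  "Hf s = QQ * prod_list (map sf s)"

lemma Hf_eq: "Hf s = (if s = [] then 1 else 0) + xx * Hf (actU s) + yy * Hf (actS s)"
proof (cases s rule: actU.cases)
  case 1
  then show ?thesis using eq_Q by (simp add: Hf_def algebra_simps)
next
  case (2 s')
  have "QQ * (uu * prod_list (map sf s')) = QQ * prod_list (map sf s') * uu" by (simp add: algebra_simps)
  also have "\<dots> = QQ * prod_list (map sf s') * (yy + xx * (uu * vv))" using eq_u by simp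
  finally show ?thesis using 2 by (simp add: Hf_def algebra_simps)
next
  case (3 s')
  have "QQ * (vv * prod_list (map sf s')) = QQ * prod_list (map sf s') * vv" by (simp add: algebra_simps)
  also have "\<dots> = QQ * prod_list (map sf s') * (xx * ww + yy * (vv * uu))" using eq_v by simp
  finally show ?thesis using 3 by (simp add: Hf_def algebra_simps)
next
  case (4 s')
  have "QQ * (ww * prod_list (map sf s')) = QQ * prod_list (map sf s') * ww" by (simp add: algebra_simps)
  also have "\<dots> = QQ * prod_list (map sf s') * (xx + yy * (ww * uu))" using eq_w by simp
  finally show ?thesis using 4 by (simp add: Hf_def algebra_simps)
qed

lemma one_nth2: "(1 :: rat fps fps) $ m $ n = (if m = 0 \<and> n = 0 then 1 else 0)"
  by simp

lemma Rec_Hf: "Rec Hf"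
  unfolding Rec_def
proof (intro allI impI)
  fix s m n
  show "Hf s $ m $ n = (if s = [] \<and> m = 0 \<and> n = 0 then 1 else 0)
      + (if n > 0 then Hf (actU s) $ m $ (n-1) else 0)
      + (if m > 0 then Hf (actS s) $ (m-1) $ n else 0)"
    by (subst Hf_eq) (simp add: xx_nth yy_nth)
qed

lemma Qser_QQ: "Qser = QQ"
proof -
  have "Qser = Gc []" by (rule Qser_Gc)
  also have "\<dots> = Hf []" by (rule Rec_unique[OF Rec_Gc Rec_Hf]) simp
  finally show ?thesis by (simp add: Hf_def)
qed


definition diag :: "rat fps fps \<Rightarrow> rat fps" where
  "diag F = Abs_fps (\<lambda>N. \<Sum>i\<le>N. F $ (N - i) $ i)"

lemma diag_nth: "diag F $ N = (\<Sum>i\<le>N. F $ (N - i) $ i)"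
  by (simp add: diag_def)

lemma diag_zero: "diag 0 = 0"
  by (rule fps_ext) (simp add: diag_nth)

lemma diag_add: "diag (F + G) = diag F + diag G"
  by (rule fps_ext) (simp add: diag_nth sum.distrib)

lemma diag_uminus: "diag (- F) = - diag F"
  by (rule fps_ext) (simp add: diag_nth sum_negf)

lemma diag_diff: "diag (F - G) = diag F - diag G"
  by (rule fps_ext) (simp add: diag_nth sum_subtractf)

lemma diag_const: "diag (fps_const c) = c"
proof (rule fps_ext)
  fix N :: nat
  have "(\<Sum>i\<le>N. fps_const c $ (N - i) $ i) = (\<Sum>i\<in>{N}. fps_const c $ (N - i) $ i)"
    by (intro sum.mono_neutral_right) auto
  then show "diag (fps_const c) $ N = c $ N" by (simp add: diag_nth)
qed

lemma diag_one: "diag 1 = 1"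
  using diag_const[of 1] by simp

lemma diag_numeral: "diag (numeral k) = numeral k"
  using diag_const[of "numeral k"] by (simp add: fps_numeral_fps_const)

lemma diag_xx: "diag xx = fps_X"
  unfolding xx_def by (rule diag_const)

lemma diag_yy: "diag yy = fps_X"
proof (rule fps_ext)
  fix N :: nat
  show "diag yy $ N = fps_X $ N"
  proof (cases "N = 0")
    case True then show ?thesis by (simp add: diag_nth yy_def fps_X_def)
  next
    case False
    have "(\<Sum>i\<le>N. yy $ (N - i) $ i) = (\<Sum>i\<in>{0}. yy $ (N - i) $ i)"
      by (intro sum.mono_neutral_right) (auto simp: yy_def fps_X_def)
    then show ?thesis using False by (simp add: diag_nth yy_def fps_X_def)
  qed
qed

lemma diag_mult: "diag (F * G) = diag F * diag G"
proof (rule fps_ext)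
  fix N :: nat
  let ?SL = "Sigma {..N} (\<lambda>i. Sigma {0..N-i} (\<lambda>a. {0..i}))"
  let ?SR = "Sigma {0..N} (\<lambda>k. Sigma {..k} (\<lambda>b. {..N-k}))"
  have L: "diag (F*G) $ N = (\<Sum>(i,a,b) \<in> ?SL. F$a$b * G$(N-i-a)$(i-b))"
    unfolding diag_nth mult_nth2 by (simp add: sum.Sigma split_def)
  have R: "(diag F * diag G) $ N = (\<Sum>(k,b,j) \<in> ?SR. F$(k-b)$b * G$(N-k-j)$j)"
    unfolding fps_mult_nth diag_nth by (simp add: sum.Sigma split_def sum_product)
  have "(\<Sum>(i,a,b) \<in> ?SL. F$a$b * G$(N-i-a)$(i-b)) = (\<Sum>(k,b,j) \<in> ?SR. F$(k-b)$b * G$(N-k-j)$j)"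
    by (rule sum.reindex_bij_witness[where j = "\<lambda>(i,a,b). (a+b, b, i-b)"
          and i = "\<lambda>(k,b,j). (j+b, k-b, b)"]) (auto simp: algebra_simps)
  then show "diag (F * G) $ N = (diag F * diag G) $ N" using L R by simp
qed

lemma diag_power: "diag (F ^ n) = diag F ^ n"
  by (induction n) (simp_all add: diag_one diag_mult)

lemmas diag_simps = diag_zero diag_add diag_uminus diag_diff diag_one diag_numeral diag_xx diag_yy diag_mult diag_power


lemma cubic_alg:
  fixes x y u v w Q :: "'a::comm_ring_1"
  assumes eu: "u = y + x*(u*v)" and ev: "v = x*w + y*(v*u)" and ew: "w = x + y*(w*u)"
    and eQ: "Q = 1 + x*(v*Q) + y*(u*Q)"
  shows "(y^6 - x^6 + 6*y^2*x^3 - 3*y^4 + 2*x^3 + 3*y^2 - 1)*Q^3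
      + (x^3*y^2 - y^4 + x^3 + 2*y^2 - 1)*Q^2 + (x^3 - y^2 + 1)*Q + 1 = 0"
proof -
  define s where "s = y*u"
  define t where "t = x*v"
  have r2: "v*(1-s) = x*w" using ev unfolding s_def by (simp add: algebra_simps)
  have r3: "w*(1-s) = x" using ew unfolding s_def by (simp add: algebra_simps)
  have A: "t*(1-s)^2 = x^3"
  proof -
    have "t*(1-s)^2 = x*((v*(1-s))*(1-s))" unfolding t_def by (simp add: power2_eq_square algebra_simps)
    also have "\<dots> = x*(x*(w*(1-s)))" by (subst r2) (simp add: algebra_simps)
    also have "\<dots> = x^3" using r3 by (simp add: power3_eq_cube)
    finally show ?thesis .
  qed
  have B: "s*(1-t) = y^2"
  proof -
    have "s*(1-t) = y*(u - x*(u*v))" unfolding s_def t_def by (simp add: algebra_simps)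
    also have "\<dots> = y*y" using arg_cong[OF eu, of "\<lambda>z. z - x*(u*v)"] by simp
    finally show ?thesis by (simp add: power2_eq_square)
  qed
  have C: "Q*(1-s-t) = 1"
    using eQ unfolding s_def t_def by (simp add: algebra_simps)
  have idq: "Q*s^2 + s - Q*y^2 = Q*(s*(1-t) - y^2) - s*(Q*(1-s-t) - 1)"
    by (simp add: algebra_simps power2_eq_square)
  have q: "Q*s^2 + s - Q*y^2 = 0" using idq B C by simp
  have idC: "Q*(1-s)^3 - (1-s)^2 - Q*x^3 = Q*(t*(1-s)^2 - x^3) + (1-s)^2*(Q*(1-s-t) - 1)"
    by (simp add: algebra_simps power2_eq_square power3_eq_cube)
  have Cp: "Q*(1-s)^3 - (1-s)^2 - Q*x^3 = 0" using idC A C by simp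
  define al where "al = -(1 + 3*Q + Q*y^2)"
  define be where "be = -1 + Q + 3*Q*y^2 - Q*x^3"
  have idl: "Q*(1-s)^3 - (1-s)^2 - Q*x^3 = (al*s + be) + (3 - s)*(Q*s^2 + s - Q*y^2)"
    unfolding al_def be_def by (simp add: algebra_simps power2_eq_square power3_eq_cube)
  have lin: "al*s + be = 0" using idl Cp q by simp
  have idE: "(y^6 - x^6 + 6*y^2*x^3 - 3*y^4 + 2*x^3 + 3*y^2 - 1)*Q^3
      + (x^3*y^2 - y^4 + x^3 + 2*y^2 - 1)*Q^2 + (x^3 - y^2 + 1)*Q + 1
      = -(al^2*(Q*s^2 + s - Q*y^2) - (al*s + be)*(Q*al*s - Q*be + al))"
    unfolding al_def be_def by (simp add: algebra_simps power2_eq_square power3_eq_cube power_numeral_reduce)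
  show ?thesis using idE q lin by simp
qed


lemma Qcubic: "(yy^6 - xx^6 + 6*yy^2*xx^3 - 3*yy^4 + 2*xx^3 + 3*yy^2 - 1) * Qser^3
          + (xx^3*yy^2 - yy^4 + xx^3 + 2*yy^2 - 1) * Qser^2
          + (xx^3 - yy^2 + 1) * Qser + 1 = 0"
  unfolding Qser_QQ by (rule cubic_alg[OF eq_u eq_v eq_w eq_Q])

lemma t_sum: "t n = (\<Sum>i\<le>n. q i (n - i))"
proof -
  have eq: "{w. length w = n \<and> trivial_in_Gamma w} =
     (\<Union>i\<in>{..n}. {w. cntU w = i \<and> cntS w = n - i \<and> trivial_in_Gamma w})"
    by (auto simp: length_cnt)
  have fin: "finite {w. cntU w = i \<and> cntS w = n - i \<and> trivial_in_Gamma w}" for i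
    by (rule finite_subset[OF _ finite_len[of "i + (n - i)"]]) (auto simp: length_cnt)
  have "t n = card (\<Union>i\<in>{..n}. {w. cntU w = i \<and> cntS w = n - i \<and> trivial_in_Gamma w})"
    unfolding t_def eq ..
  also have "\<dots> = (\<Sum>i\<le>n. card {w. cntU w = i \<and> cntS w = n - i \<and> trivial_in_Gamma w})"
    by (rule card_UN_disjoint) (use fin in auto)
  also have "\<dots> = (\<Sum>i\<le>n. q i (n - i))"
    by (simp add: q_def cntU_def cntS_def)
  finally show ?thesis .
qed

lemma Tser_eq: "Tser = Abs_fps (\<lambda>n. \<Sum>i\<le>n. of_nat (q i (n - i)))"
  unfolding Tser_def by (simp add: t_sum)

lemma diag_Qser: "diag Qser = Tser"
  by (rule fps_ext) (simp add: diag_nth Tser_eq Qser_def)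

lemma Tcubic: "(6*fps_X^5 - 3*fps_X^4 + 2*fps_X^3 + 3*fps_X^2 - 1) * Tser^3
          + (fps_X^5 - fps_X^4 + fps_X^3 + 2*fps_X^2 - 1) * Tser^2
          + (fps_X^3 - fps_X^2 + 1) * Tser + 1 = (0 :: rat fps)"
proof -
  have "diag ((yy^6 - xx^6 + 6*yy^2*xx^3 - 3*yy^4 + 2*xx^3 + 3*yy^2 - 1) * Qser^3
          + (xx^3*yy^2 - yy^4 + xx^3 + 2*yy^2 - 1) * Qser^2
          + (xx^3 - yy^2 + 1) * Qser + 1) = diag 0"
    using Qcubic by simp
  then have "(fps_X^6 - fps_X^6 + 6*fps_X^2*fps_X^3 - 3*fps_X^4 + 2*fps_X^3 + 3*fps_X^2 - 1) * Tser^3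
          + (fps_X^3*fps_X^2 - fps_X^4 + fps_X^3 + 2*fps_X^2 - 1) * Tser^2
          + (fps_X^3 - fps_X^2 + 1) * Tser + 1 = (0 :: rat fps)"
    by (simp only: diag_simps diag_Qser)
  then show ?thesis by (simp add: algebra_simps power_add[symmetric])
qed


lemmas Cf_hom = fps_of_poly_add fps_of_poly_diff fps_of_poly_uminus fps_of_poly_mult
  fps_of_poly_power fps_of_poly_numeral fps_of_poly_fps_X fps_of_poly_1 fps_of_poly_0

abbreviation pX :: "rat poly" where "pX \<equiv> [:0, 1:]"

definition c3p :: "rat poly" where "c3p = 6*pX^5 - 3*pX^4 + 2*pX^3 + 3*pX^2 - 1"
definition c2p :: "rat poly" where "c2p = pX^5 - pX^4 + pX^3 + 2*pX^2 - 1"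
definition c1p :: "rat poly" where "c1p = pX^3 - pX^2 + 1"

definition Hp :: "rat poly \<Rightarrow> rat poly \<Rightarrow> rat poly" where
  "Hp p r = c3p*p^3 + c2p*p^2*r + c1p*p*r^2 + r^3"

lemma no_rat_root: "(z::rat)^3 + z^2 + 2*z + 7 \<noteq> 0"
proof
  assume h: "z^3 + z^2 + 2*z + 7 = 0"
  obtain n d where qd: "quotient_of z = (n, d)" by (cases "quotient_of z")
  have zd: "z = of_int n / of_int d" by (rule quotient_of_div[OF qd])
  have dpos: "d > 0" by (rule quotient_of_denom_pos[OF qd])
  have cop: "coprime n d" by (rule quotient_of_coprime[OF qd])
  have zD: "of_int n = z * of_int d" using zd dpos by simp
  have "(of_int (n^3 + n^2*d + 2*n*d^2 + 7*d^3) :: rat) = (z * of_int d)^3 + (z * of_int d)^2 * of_int d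
       + 2 * (z * of_int d) * (of_int d)^2 + 7 * (of_int d)^3"
    unfolding zD[symmetric] by simp
  also have "\<dots> = (of_int d)^3 * (z^3 + z^2 + 2*z + 7)"
    by (simp add: algebra_simps power2_eq_square power3_eq_cube)
  finally have "(of_int (n^3 + n^2*d + 2*n*d^2 + 7*d^3) :: rat) = 0" using h by simp
  then have eq: "n^3 + n^2*d + 2*n*d^2 + 7*d^3 = 0" by (simp only: of_int_eq_0_iff)
  have ne: "\<not> (even n \<and> even d)"
  proof
    assume "even n \<and> even d"
    then have "is_unit (2::int)" using cop coprime_common_divisor by blast
    then show False by simp
  qed
  have "odd (n^3 + n^2*d + 2*n*d^2 + 7*d^3)"
    using ne by (auto simp: even_add even_mult_iff)
  then show False using eq by simp
qed

lemma eval_ne: "(k::rat) \<noteq> 0 \<Longrightarrow> 7*k^3 + 2*k^2*z + k*z^2 + z^3 \<noteq> 0"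
proof
  assume k: "k \<noteq> 0" and h: "7*k^3 + 2*k^2*z + k*z^2 + z^3 = 0"
  define w where "w = z / k"
  have "z = w * k" using k by (simp add: w_def)
  then have "k^3 * (w^3 + w^2 + 2*w + 7) = 0" using h
    by (simp add: algebra_simps power2_eq_square power3_eq_cube)
  then show False using k no_rat_root[of w] by simp
qed

lemma Hp_homog: "Hp (p * g) (r * g) = g^3 * Hp p r"
  unfolding Hp_def by (simp add: algebra_simps power2_eq_square power3_eq_cube)

lemma Hp_ne: assumes "r \<noteq> 0" shows "Hp p r \<noteq> 0"
proof
  assume H0: "Hp p r = 0"
  have g0: "gcd p r \<noteq> 0" using assms by simp
  obtain p' r' where pr: "p = p' * gcd p r" "r = r' * gcd p r" and cop: "coprime p' r'"
    using gcd_coprime_exists[OF g0] by blast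
  have "Hp (p' * gcd p r) (r' * gcd p r) = gcd p r ^ 3 * Hp p' r'" by (rule Hp_homog)
  then have "Hp p r = gcd p r ^ 3 * Hp p' r'" by (simp only: pr(1)[symmetric] pr(2)[symmetric])
  then have "gcd p r ^ 3 * Hp p' r' = 0" using H0 by simp
  moreover have "gcd p r ^ 3 \<noteq> 0" using g0 by simp
  ultimately have H1: "Hp p' r' = 0" by (simp only: mult_eq_0_iff) blast
  have idr: "r'^3 = p' * (-(c3p*p'^2 + c2p*p'*r' + c1p*r'^2)) + (c3p*p'^3 + c2p*p'^2*r' + c1p*p'*r'^2 + r'^3)"
    by (simp add: algebra_simps power2_eq_square power3_eq_cube)
  have "r'^3 = p' * (-(c3p*p'^2 + c2p*p'*r' + c1p*r'^2))"
  proof -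
    have "c3p*p'^3 + c2p*p'^2*r' + c1p*p'*r'^2 + r'^3 = 0" using H1 unfolding Hp_def .
    then show ?thesis using idr by (metis add.right_neutral)
  qed
  then have dv: "p' dvd r'^3" by (metis dvd_triv_left)
  have cp: "coprime p' (r'^3)" using cop by (simp only: coprime_power_right_iff) simp
  have "is_unit p'" by (rule coprime_common_divisor[OF cp dvd_refl dv])
  then obtain k where k0: "p' = [:k:]" "is_unit k"
    by (auto simp: is_unit_poly_iff)
  then have k: "p' = [:k:]" "k \<noteq> 0" by auto
  have v3: "poly c3p 1 = 7" by (simp add: c3p_def)
  have v2: "poly c2p 1 = 2" by (simp add: c2p_def)
  have v1: "poly c1p 1 = 1" by (simp add: c1p_def)
  have "poly (Hp p' r') 1 = poly c3p 1*k^3 + poly c2p 1*k^2*poly r' 1 + poly c1p 1*k*(poly r' 1)^2 + (poly r' 1)^3"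
    unfolding Hp_def k by simp
  then have "poly (Hp p' r') 1 = 7*k^3 + 2*k^2*poly r' 1 + k*(poly r' 1)^2 + (poly r' 1)^3"
    unfolding v1 v2 v3 by simp
  then show False using H1 eval_ne[OF k(2)] by simp
qed

lemma Hp_Cf: "fps_of_poly (Hp p r) = fps_of_poly c3p * fps_of_poly p ^ 3 + fps_of_poly c2p * fps_of_poly p ^ 2 * fps_of_poly r
   + fps_of_poly c1p * fps_of_poly p * fps_of_poly r ^ 2 + fps_of_poly r ^ 3"
  unfolding Hp_def by (simp add: Cf_hom)

lemma Hp_root:
  assumes E: "fps_of_poly c3p * T^3 + fps_of_poly c2p * T^2 + fps_of_poly c1p * T + 1 = 0"
    and pr: "fps_of_poly p = fps_of_poly r * T"
  shows "Hp p r = 0"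
proof -
  have "fps_of_poly (Hp p r) = fps_of_poly r ^ 3 * (fps_of_poly c3p * T^3 + fps_of_poly c2p * T^2 + fps_of_poly c1p * T + 1)"
    unfolding Hp_Cf pr by (simp add: algebra_simps power2_eq_square power3_eq_cube)
  then have "fps_of_poly (Hp p r) = 0" using E by simp
  then show ?thesis by (metis fps_of_poly_0 fps_of_poly_eq_iff)
qed

lemma Cf_zero_iff: "fps_of_poly p = 0 \<longleftrightarrow> p = 0"
  by (metis fps_of_poly_0 fps_of_poly_eq_iff)

lemma i1: fixes a b c c1p c2p c3p Z l1 l0 al be :: "'a::comm_ring_1"
  assumes "l1 = a * c3p" "l0 = a * c2p - b * c3p" "al = a^2 * c1p - b * l0 - c * l1" "be = a^2 - c * l0"
  shows "a^2 * (c3p*Z^3 + c2p*Z^2 + c1p*Z + 1) = (a*Z^2 + b*Z + c)*(l1*Z + l0) + (al*Z + be)"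
  unfolding assms by (simp add: algebra_simps power2_eq_square power3_eq_cube)
lemma i2: fixes a b c c1p c2p c3p Z l1 l0 al be :: "'a::comm_ring_1"
  assumes "l1 = a * c3p" "l0 = a * c2p - b * c3p" "al = a^2 * c1p - b * l0 - c * l1" "be = a^2 - c * l0"
  shows "a^2 * (c3p*(-l0)^3 + c2p*(-l0)^2*l1 + c1p*(-l0)*l1^2 + l1^3) = (a*(-l0)^2 + b*(-l0)*l1 + c*l1^2)*(l1*(-l0) + l0*l1) + (al*(-l0) + be*l1)*l1^2"
  unfolding assms by (simp add: algebra_simps power2_eq_square power3_eq_cube)

lemma no_quadratic:
  assumes E: "fps_of_poly c3p * T^3 + fps_of_poly c2p * T^2 + fps_of_poly c1p * T + 1 = 0"
    and F: "fps_of_poly a * T^2 + fps_of_poly b * T + fps_of_poly c = 0"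
    and nz: "a \<noteq> 0 \<or> b \<noteq> 0 \<or> c \<noteq> 0"
  shows False
proof (cases "a = 0")
  case True
  then have F1: "fps_of_poly b * T + fps_of_poly c = 0" using F by simp
  show False
  proof (cases "b = 0")
    case True
    then have "c = 0" using F1 by (simp add: Cf_zero_iff)
    then show False using nz \<open>a = 0\<close> True by simp
  next
    case False
    have "fps_of_poly b * T = - fps_of_poly c" using F1 by (metis eq_neg_iff_add_eq_0)
    then have "fps_of_poly (-c) = fps_of_poly b * T" by (simp add: fps_of_poly_uminus)
    then have "Hp (-c) b = 0" by (rule Hp_root[OF E])
    then show False using Hp_ne[OF False] by blast
  qed
next
  case False
  define l1 where "l1 = a * c3p"
  define l0 where "l0 = a * c2p - b * c3p"
  define al where "al = a^2 * c1p - b * l0 - c * l1"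
  define be where "be = a^2 - c * l0"
  have h1: "fps_of_poly l1 = fps_of_poly a * fps_of_poly c3p" unfolding l1_def by (simp only: Cf_hom)
  have h2: "fps_of_poly l0 = fps_of_poly a * fps_of_poly c2p - fps_of_poly b * fps_of_poly c3p"
    unfolding l0_def by (simp only: Cf_hom)
  have h3: "fps_of_poly al = fps_of_poly a ^ 2 * fps_of_poly c1p - fps_of_poly b * fps_of_poly l0 - fps_of_poly c * fps_of_poly l1"
    unfolding al_def by (simp only: Cf_hom)
  have h4: "fps_of_poly be = fps_of_poly a ^ 2 - fps_of_poly c * fps_of_poly l0"
    unfolding be_def by (simp only: Cf_hom)
  have idenT: "fps_of_poly a ^ 2 * (fps_of_poly c3p*T^3 + fps_of_poly c2p*T^2 + fps_of_poly c1p*T + 1)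
     = (fps_of_poly a*T^2 + fps_of_poly b*T + fps_of_poly c)*(fps_of_poly l1*T + fps_of_poly l0)
       + (fps_of_poly al*T + fps_of_poly be)"
    by (rule i1[OF h1 h2 h3 h4])
  have "fps_of_poly a ^ 2 * 0 = 0 * (fps_of_poly l1*T + fps_of_poly l0) + (fps_of_poly al*T + fps_of_poly be)"
    using idenT unfolding E F .
  then have lin: "fps_of_poly al * T + fps_of_poly be = 0" by simp
  show False
  proof (cases "al = 0")
    case False
    have "fps_of_poly al * T = - fps_of_poly be" using lin by (metis eq_neg_iff_add_eq_0)
    then have "fps_of_poly (-be) = fps_of_poly al * T" by (simp add: fps_of_poly_uminus)
    then have "Hp (-be) al = 0" by (rule Hp_root[OF E])
    then show False using Hp_ne[OF False] by blast
  next
    case True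
    then have be0: "be = 0" using lin by (simp add: Cf_zero_iff)
    have iden2: "a^2 * Hp (-l0) l1 = (a*(-l0)^2 + b*(-l0)*l1 + c*l1^2)*(l1*(-l0) + l0*l1) + (al*(-l0) + be*l1)*l1^2"
      unfolding Hp_def by (rule i2[OF l1_def l0_def al_def be_def])
    then have "a^2 * Hp (-l0) l1 = 0" using True be0 by simp
    then have "Hp (-l0) l1 = 0" using \<open>a \<noteq> 0\<close> by simp
    moreover have "l1 \<noteq> 0" unfolding l1_def c3p_def using \<open>a \<noteq> 0\<close> by (auto dest: arg_cong[where f="\<lambda>p. poly p 1"])
    ultimately show False using Hp_ne by blast
  qed
qed


lemma embed2_nth: "embed2 p $ m = fps_of_poly (coeff p m)"
  unfolding embed2_def by (simp add: coeff_map_poly)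

lemma embed2_diff: "embed2 (p1 - p2) = embed2 p1 - embed2 p2"
  by (rule fps_ext) (simp add: embed2_nth fps_of_poly_diff)

lemma embed2_add: "embed2 (p1 + p2) = embed2 p1 + embed2 p2"
  by (rule fps_ext) (simp add: embed2_nth fps_of_poly_add)

lemma embed2_pCons: "embed2 (pCons c p) = fps_const (fps_of_poly c) + yy * embed2 p"
  by (rule fps_ext) (auto simp: embed2_nth yy_def coeff_pCons split: nat.splits)

lemma embed2_smult: "embed2 (smult pX p) = xx * embed2 p"
  by (rule fps_ext) (simp add: embed2_nth xx_def fps_mult_left_const_nth fps_of_poly_mult)

lemma embed2_lin: "embed2 ([:-pX, 1:] * p) = (yy - xx) * embed2 p"
proof -
  have "[:-pX, 1:] * p = smult (-pX) p + pCons 0 ([:1:] * p)"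
    by (rule mult_pCons_left)
  also have "\<dots> = pCons 0 p - smult pX p"
    by (simp only: smult_minus_left) simp
  finally have eq: "[:-pX, 1:] * p = pCons 0 p - smult pX p" .
  show ?thesis unfolding eq
    by (simp only: embed2_diff embed2_pCons embed2_smult) (simp add: algebra_simps)
qed

lemma diag_embed2: "diag (embed2 a) = fps_of_poly (poly a pX)"
proof (induction a)
  case 0
  then show ?case by (simp add: embed2_def diag_zero)
next
  case (pCons c p)
  then show ?case
    by (simp add: embed2_pCons diag_add diag_const diag_mult diag_yy fps_of_poly_add fps_of_poly_mult)
qed

lemma yy_xx_ne: "yy - xx \<noteq> 0"
proof
  assume "yy - xx = 0"
  then have "(yy - xx) $ 1 $ 0 = 0" by simp
  then show False by (simp add: yy_def xx_def)
qed

lemma peel: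
  "embed2 a * Qser^2 + embed2 b * Qser + embed2 c = 0 \<Longrightarrow> (a \<noteq> 0 \<or> b \<noteq> 0 \<or> c \<noteq> 0) \<Longrightarrow>
   \<exists>a' b' c'. (a' \<noteq> 0 \<or> b' \<noteq> 0 \<or> c' \<noteq> 0) \<and>
      fps_of_poly a' * Tser^2 + fps_of_poly b' * Tser + fps_of_poly c' = 0"
proof (induction "degree a + degree b + degree c" arbitrary: a b c rule: less_induct)
  case less
  show ?case
  proof (cases "poly a pX = 0 \<and> poly b pX = 0 \<and> poly c pX = 0")
    case False
    have "diag (embed2 a * Qser^2 + embed2 b * Qser + embed2 c) = diag 0"
      using less.prems(1) by simp
    then have "fps_of_poly (poly a pX) * Tser^2 + fps_of_poly (poly b pX) * Tser + fps_of_poly (poly c pX) = 0"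
      by (simp only: diag_simps diag_Qser diag_embed2)
    then show ?thesis using False by blast
  next
    case True
    define a1 where "a1 = synthetic_div a pX"
    define b1 where "b1 = synthetic_div b pX"
    define c1 where "c1 = synthetic_div c pX"
    have ea: "a = [:-pX, 1:] * a1" unfolding a1_def using synthetic_div_correct'[of pX a] True by simp
    have eb: "b = [:-pX, 1:] * b1" unfolding b1_def using synthetic_div_correct'[of pX b] True by simp
    have ec: "c = [:-pX, 1:] * c1" unfolding c1_def using synthetic_div_correct'[of pX c] True by simp
    have "(yy - xx) * (embed2 a1 * Qser^2 + embed2 b1 * Qser + embed2 c1) = 0"
      using less.prems(1) unfolding ea eb ec embed2_lin by (simp add: algebra_simps)
    then have rel: "embed2 a1 * Qser^2 + embed2 b1 * Qser + embed2 c1 = 0"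
      using yy_xx_ne by simp
    have nz: "a1 \<noteq> 0 \<or> b1 \<noteq> 0 \<or> c1 \<noteq> 0" using less.prems(2) ea eb ec by auto
    have da0: "degree a1 = degree a - 1" unfolding a1_def by (rule degree_synthetic_div)
    have da1: "degree a \<noteq> 0" if "a \<noteq> 0"
    proof
      assume "degree a = 0"
      then have "a1 = 0" unfolding a1_def by (simp only: synthetic_div_eq_0_iff)
      then show False using ea that by simp
    qed
    have da: "degree a1 \<le> degree a" "a \<noteq> 0 \<Longrightarrow> degree a1 < degree a"
      using da0 da1 by auto
    have db0: "degree b1 = degree b - 1" unfolding b1_def by (rule degree_synthetic_div)
    have db1: "degree b \<noteq> 0" if "b \<noteq> 0"
    proof
      assume "degree b = 0"
      then have "b1 = 0" unfolding b1_def by (simp only: synthetic_div_eq_0_iff)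
      then show False using eb that by simp
    qed
    have db: "degree b1 \<le> degree b" "b \<noteq> 0 \<Longrightarrow> degree b1 < degree b"
      using db0 db1 by auto
    have dc0: "degree c1 = degree c - 1" unfolding c1_def by (rule degree_synthetic_div)
    have dc1: "degree c \<noteq> 0" if "c \<noteq> 0"
    proof
      assume "degree c = 0"
      then have "c1 = 0" unfolding c1_def by (simp only: synthetic_div_eq_0_iff)
      then show False using ec that by simp
    qed
    have dc: "degree c1 \<le> degree c" "c \<noteq> 0 \<Longrightarrow> degree c1 < degree c"
      using dc0 dc1 by auto
    have "degree a1 + degree b1 + degree c1 < degree a + degree b + degree c"
      using da db dc less.prems(2) by linarith
    then show ?thesis using less.hyps rel nz by blast
  qed
qed

lemma Tpoly_eq: "(6*fps_X^5 - 3*fps_X^4 + 2*fps_X^3 + 3*fps_X^2 - 1) * Tser^3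
          + (fps_X^5 - fps_X^4 + fps_X^3 + 2*fps_X^2 - 1) * Tser^2
          + (fps_X^3 - fps_X^2 + 1) * Tser + 1
    = fps_of_poly c3p * Tser^3 + fps_of_poly c2p * Tser^2 + fps_of_poly c1p * Tser + 1"
  by (simp add: c3p_def c2p_def c1p_def Cf_hom)

theorem mainTheorem1:
  shows "(yy^6 - xx^6 + 6*yy^2*xx^3 - 3*yy^4 + 2*xx^3 + 3*yy^2 - 1) * Qser^3
          + (xx^3*yy^2 - yy^4 + xx^3 + 2*yy^2 - 1) * Qser^2
          + (xx^3 - yy^2 + 1) * Qser + 1 = 0
     \<and> \<not> (\<exists>a b c :: rat poly poly. (a \<noteq> 0 \<or> b \<noteq> 0 \<or> c \<noteq> 0) \<and>
            embed2 a * Qser^2 + embed2 b * Qser + embed2 c = 0)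
     \<and> Tser = Abs_fps (\<lambda>n. \<Sum>i\<le>n. of_nat (q i (n - i)))
     \<and> (6*fps_X^5 - 3*fps_X^4 + 2*fps_X^3 + 3*fps_X^2 - 1) * Tser^3
          + (fps_X^5 - fps_X^4 + fps_X^3 + 2*fps_X^2 - 1) * Tser^2
          + (fps_X^3 - fps_X^2 + 1) * Tser + 1 = 0
     \<and> \<not> (\<exists>a b c :: rat poly. (a \<noteq> 0 \<or> b \<noteq> 0 \<or> c \<noteq> 0) \<and>
            fps_of_poly a * Tser^2 + fps_of_poly b * Tser + fps_of_poly c = 0)"
proof -
  have E: "fps_of_poly c3p * Tser^3 + fps_of_poly c2p * Tser^2 + fps_of_poly c1p * Tser + 1 = 0"
    using Tcubic Tpoly_eq by simp
  have nq: "\<not> (\<exists>a b c :: rat poly. (a \<noteq> 0 \<or> b \<noteq> 0 \<or> c \<noteq> 0) \<and>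
            fps_of_poly a * Tser^2 + fps_of_poly b * Tser + fps_of_poly c = 0)"
    using no_quadratic[OF E] by blast
  have nq2: "\<not> (\<exists>a b c :: rat poly poly. (a \<noteq> 0 \<or> b \<noteq> 0 \<or> c \<noteq> 0) \<and>
            embed2 a * Qser^2 + embed2 b * Qser + embed2 c = 0)"
  proof
    assume "\<exists>a b c :: rat poly poly. (a \<noteq> 0 \<or> b \<noteq> 0 \<or> c \<noteq> 0) \<and>
            embed2 a * Qser^2 + embed2 b * Qser + embed2 c = 0"
    then obtain a b c :: "rat poly poly" where "a \<noteq> 0 \<or> b \<noteq> 0 \<or> c \<noteq> 0"
      "embed2 a * Qser^2 + embed2 b * Qser + embed2 c = 0" by blast
    from peel[OF this(2,1)] show False using nq by blast
  qed
  show ?thesis using Qcubic nq2 Tser_eq Tcubic nq by (intro conjI)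
qed


end
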